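(* A (Hausdorff, real) topological vector space $E$ contains a linear subspace topologically isomorphic to $\mathbb{R}^{\mathbb{N}}$ if and only if $E$ contains a non-trivial $\mathbb{R}^{\mathbb{N}}$-convergent sequence.
   Context: $\mathbb{R}^{\mathbb{N}}$ carries the Tychonoff product topology. A sequence $\{a_n:n\in\mathbb{N}\}$ in $E$ is $\mathbb{R}^{\mathbb{N}}$-convergent if for every real sequence $\{r_n:n\in\mathbb{N}\}$ the series $\sum_{n}r_na_n$ converges in $E$ (i.e. its partial sums converge to some element of $E$). Such a sequence is non-trivial if $a_n\neq 0$ for infinitely many $n$. *)

theory Defs
  imports "HOL-Analysis.Analysis"
begin

text \<open>A real topological vector space: vector addition and scalar multiplication are
  continuous (product topologies). Hausdorffness is imposed via the class t2_space.\<close>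
definition is_tvs :: "'a::{real_vector, topological_space} itself \<Rightarrow> bool" where
  "is_tvs _ \<longleftrightarrow>
     continuous_on UNIV (\<lambda>p::'a \<times> 'a. fst p + snd p) \<and>
     continuous_on UNIV (\<lambda>p::real \<times> 'a. fst p *\<^sub>R snd p)"

text \<open>R^N is modelled as nat => real with the Tychonoff product topology (the library's
  topology on function spaces) and pointwise vector operations.\<close>
definition contains_RN :: "'a::{real_vector, topological_space} itself \<Rightarrow> bool" where
  "contains_RN _ \<longleftrightarrow>
     (\<exists>(L::'a set) (T::(nat \<Rightarrow> real) \<Rightarrow> 'a).
        subspace L \<and>
        (\<forall>f g. T (\<lambda>n. f n + g n) = T f + T g) \<and>
        (\<forall>c f. T (\<lambda>n. c * f n) = c *\<^sub>R T f) \<and>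
        homeomorphic_map (euclidean :: (nat \<Rightarrow> real) topology) (top_of_set L) T)"

definition RN_convergent :: "(nat \<Rightarrow> 'a::{real_vector, topological_space}) \<Rightarrow> bool" where
  "RN_convergent a \<longleftrightarrow> (\<forall>r::nat \<Rightarrow> real. summable (\<lambda>n. r n *\<^sub>R a n))"

definition nontrivial_seq :: "(nat \<Rightarrow> 'a::zero) \<Rightarrow> bool" where
  "nontrivial_seq a \<longleftrightarrow> infinite {n. a n \<noteq> 0}"

end

theory Submission
  imports Defs
begin


lemma tvs_add:
  assumes A: "is_tvs TYPE('a::{real_vector,t2_space})"
    and f: "(f \<longlongrightarrow> (x::'a)) F" and g: "(g \<longlongrightarrow> y) F"
  shows "((\<lambda>t. f t + g t) \<longlongrightarrow> x + y) F"
proof -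
  have c: "continuous_on UNIV (\<lambda>p::'a \<times> 'a. fst p + snd p)" using A by (simp add: is_tvs_def)
  have "((\<lambda>t. (f t, g t)) \<longlongrightarrow> (x, y)) F" by (rule tendsto_Pair[OF f g])
  from continuous_on_tendsto_compose[OF c this] show ?thesis by simp
qed

lemma tvs_scale:
  assumes A: "is_tvs TYPE('a::{real_vector,t2_space})"
    and f: "(c \<longlongrightarrow> (a::real)) F" and g: "(g \<longlongrightarrow> (y::'a)) F"
  shows "((\<lambda>t. c t *\<^sub>R g t) \<longlongrightarrow> a *\<^sub>R y) F"
proof -
  have c: "continuous_on UNIV (\<lambda>p::real \<times> 'a. fst p *\<^sub>R snd p)" using A by (simp add: is_tvs_def)
  have "((\<lambda>t. (c t, g t)) \<longlongrightarrow> (a, y)) F" by (rule tendsto_Pair[OF f g])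
  from continuous_on_tendsto_compose[OF c this] show ?thesis by simp
qed

lemma tvs_minus:
  assumes A: "is_tvs TYPE('a::{real_vector,t2_space})"
    and g: "(g \<longlongrightarrow> (y::'a)) F"
  shows "((\<lambda>t. - g t) \<longlongrightarrow> - y) F"
  using tvs_scale[OF A tendsto_const[of "-1"] g] by simp

lemma tvs_diff:
  assumes A: "is_tvs TYPE('a::{real_vector,t2_space})"
    and f: "(f \<longlongrightarrow> (x::'a)) F" and g: "(g \<longlongrightarrow> y) F"
  shows "((\<lambda>t. f t - g t) \<longlongrightarrow> x - y) F"
  using tvs_add[OF A f tvs_minus[OF A g]] by simp

lemma tvs_sum:
  assumes A: "is_tvs TYPE('a::{real_vector,t2_space})"
    and f: "\<And>i. i \<in> I \<Longrightarrow> (f i \<longlongrightarrow> (x i::'a)) F"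
  shows "((\<lambda>t. \<Sum>i\<in>I. f i t) \<longlongrightarrow> (\<Sum>i\<in>I. x i)) F"
  using f
proof (induction I rule: infinite_finite_induct)
  case (insert i I)
  then show ?case by (simp add: tvs_add[OF A])
qed auto

lemma tvs_cont_on:
  assumes A: "is_tvs TYPE('a::{real_vector,t2_space})"
  shows "continuous_on UNIV (\<lambda>y::'a. c *\<^sub>R y + z)"
  unfolding continuous_on_def
  by (auto intro!: tvs_add[OF A] tvs_scale[OF A] tendsto_ident_at)

lemma tvs_open_preimage:
  assumes A: "is_tvs TYPE('a::{real_vector,t2_space})" and "open (U::'a set)"
  shows "open {y. c *\<^sub>R y + z \<in> U}"
  using open_vimage[OF assms(2) tvs_cont_on[OF A]] by (simp add: vimage_def)

lemma tvs_closed_preimage: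
  assumes A: "is_tvs TYPE('a::{real_vector,t2_space})" and "closed (U::'a set)"
  shows "closed {y. c *\<^sub>R y + z \<in> U}"
  using closed_vimage[OF assms(2) tvs_cont_on[OF A]] by (simp add: vimage_def)

lemma tvs_half:
  assumes A: "is_tvs TYPE('a::{real_vector,t2_space})" and "open (W::'a set)" "0 \<in> W"
  obtains V where "open V" "0 \<in> V" "\<And>u v. u \<in> V \<Longrightarrow> v \<in> V \<Longrightarrow> u + v \<in> W \<and> u - v \<in> W"
proof -
  have c: "continuous_on UNIV (\<lambda>p::'a \<times> 'a. fst p + snd p)" using A by (simp add: is_tvs_def)
  have c2: "continuous_on UNIV (\<lambda>p::'a \<times> 'a. fst p - snd p)"
    unfolding continuous_on_def
  proof (intro ballI)
    fix q :: "'a \<times> 'a"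
    show "((\<lambda>p. fst p - snd p) \<longlongrightarrow> fst q - snd q) (at q within UNIV)"
      by (intro tvs_diff[OF A] tendsto_fst tendsto_snd tendsto_ident_at)
  qed
  have o1: "open ((\<lambda>p::'a \<times> 'a. fst p + snd p) -` W)" using open_vimage[OF assms(2) c] .
  have o2: "open ((\<lambda>p::'a \<times> 'a. fst p - snd p) -` W)" using open_vimage[OF assms(2) c2] .
  have "open ((\<lambda>p::'a \<times> 'a. fst p + snd p) -` W \<inter> (\<lambda>p::'a \<times> 'a. fst p - snd p) -` W)"
    using o1 o2 by blast
  moreover have "(0,0) \<in> (\<lambda>p::'a \<times> 'a. fst p + snd p) -` W \<inter> (\<lambda>p::'a \<times> 'a. fst p - snd p) -` W"
    using assms by simp
  ultimately obtain P Q where PQ: "open P" "open Q" "(0,0) \<in> P \<times> Q"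
    "P \<times> Q \<subseteq> (\<lambda>p::'a \<times> 'a. fst p + snd p) -` W \<inter> (\<lambda>p::'a \<times> 'a. fst p - snd p) -` W"
    by (rule open_prod_elim)
  show ?thesis
    apply (rule that[of "P \<inter> Q"])
    using PQ by auto
qed

lemma tvs_regular:
  assumes A: "is_tvs TYPE('a::{real_vector,t2_space})" and "open (W::'a set)" "0 \<in> W"
  obtains V where "open V" "0 \<in> V" "closure V \<subseteq> W"
proof -
  obtain V where V: "open V" "0 \<in> V" "\<And>u v. u \<in> V \<Longrightarrow> v \<in> V \<Longrightarrow> u + v \<in> W \<and> u - v \<in> W"
    using tvs_half[OF assms] by blast
  have "closure V \<subseteq> W"
  proof
    fix x assume x: "x \<in> closure V"
    have o: "open {y. (-1) *\<^sub>R y + x \<in> V}" by (rule tvs_open_preimage[OF A V(1)])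
    have "x \<in> {y. (-1) *\<^sub>R y + x \<in> V}" using V by simp
    with x o obtain v where "v \<in> V" "(-1) *\<^sub>R v + x \<in> V"
      unfolding closure_iff_nhds_not_empty by blast
    then have "v + ((-1) *\<^sub>R v + x) \<in> W" using V(3) by blast
    then show "x \<in> W" by simp
  qed
  then show ?thesis using that V by blast
qed




lemma in_closure_open_iff:
  "x \<in> closure X \<longleftrightarrow> (\<forall>T. open T \<longrightarrow> x \<in> T \<longrightarrow> X \<inter> T \<noteq> {})"
  unfolding closure_iff_nhds_not_empty
  by (metis Int_mono inf.orderE subset_empty subset_refl)

lemma closure_subspace_tvs:
  assumes A: "is_tvs TYPE('a::{real_vector,t2_space})" and S: "subspace (S::'a set)"
  shows "subspace (closure S)"
  unfolding subspace_def
proof (intro conjI ballI allI)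
  show "0 \<in> closure S" using S closure_subset subspace_0 by blast
next
  fix x y assume x: "x \<in> closure S" and y: "y \<in> closure S"
  show "x + y \<in> closure S"
    unfolding in_closure_open_iff
  proof (intro allI impI)
    fix Ob assume O: "open Ob" "x + y \<in> Ob"
    have c: "continuous_on UNIV (\<lambda>p::'a \<times> 'a. fst p + snd p)" using A by (simp add: is_tvs_def)
    have "open ((\<lambda>p::'a \<times> 'a. fst p + snd p) -` Ob)" using open_vimage[OF O(1) c] .
    moreover have "(x,y) \<in> (\<lambda>p::'a \<times> 'a. fst p + snd p) -` Ob" using O by simp
    ultimately obtain P Q where PQ: "open P" "open Q" "(x,y) \<in> P \<times> Q"
      "P \<times> Q \<subseteq> (\<lambda>p::'a \<times> 'a. fst p + snd p) -` Ob" by (rule open_prod_elim)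
    obtain s where s: "s \<in> S" "s \<in> P" using x PQ unfolding in_closure_open_iff by blast
    obtain t where t: "t \<in> S" "t \<in> Q" using y PQ unfolding in_closure_open_iff by blast
    have "s + t \<in> S" using s t S subspace_add by blast
    moreover have "s + t \<in> Ob" using PQ s t by auto
    ultimately show "S \<inter> Ob \<noteq> {}" by blast
  qed
next
  fix c :: real and x assume x: "x \<in> closure S"
  show "c *\<^sub>R x \<in> closure S"
    unfolding in_closure_open_iff
  proof (intro allI impI)
    fix Ob assume O: "open Ob" "c *\<^sub>R x \<in> Ob"
    have "open {y. c *\<^sub>R y + 0 \<in> Ob}" by (rule tvs_open_preimage[OF A O(1)])
    moreover have "x \<in> {y. c *\<^sub>R y + 0 \<in> Ob}" using O by simp
    ultimately obtain s where "s \<in> S" "c *\<^sub>R s + 0 \<in> Ob" using x unfolding in_closure_open_iff by blast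
    then have "c *\<^sub>R s \<in> S \<inter> Ob" using S subspace_scale by auto
    then show "S \<inter> Ob \<noteq> {}" by blast
  qed
qed

definition Msp :: "(nat \<Rightarrow> 'a::real_vector) \<Rightarrow> nat \<Rightarrow> 'a set" where
  "Msp a n = {y. \<exists>F c. finite F \<and> F \<subseteq> {n..} \<and> y = (\<Sum>i\<in>F. c i *\<^sub>R a i)}"

lemma sum_ext_zero:
  assumes "finite G" "F \<subseteq> G"
  shows "(\<Sum>i\<in>F. c i *\<^sub>R a i) = (\<Sum>i\<in>G. (if i \<in> F then c i else 0) *\<^sub>R (a i::'a::real_vector))"
proof -
  have "(\<Sum>i\<in>G. (if i \<in> F then c i else 0) *\<^sub>R a i) = (\<Sum>i\<in>G. if i \<in> F then c i *\<^sub>R a i else 0)"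
    by (rule sum.cong) auto
  also have "\<dots> = (\<Sum>i\<in>G \<inter> F. c i *\<^sub>R a i)" by (simp add: sum.inter_restrict[OF assms(1)])
  also have "G \<inter> F = F" using assms by blast
  finally show ?thesis by simp
qed

lemma Msp_subspace: "subspace (Msp a n)"
  unfolding subspace_def
proof (intro conjI ballI allI)
  show "0 \<in> Msp a n" unfolding Msp_def by (rule CollectI, rule exI[of _ "{}"]) auto
next
  fix x y assume "x \<in> Msp a n" "y \<in> Msp a n"
  then obtain F c G d where FG: "finite F" "F \<subseteq> {n..}" "x = (\<Sum>i\<in>F. c i *\<^sub>R a i)"
    "finite G" "G \<subseteq> {n..}" "y = (\<Sum>i\<in>G. d i *\<^sub>R a i)" unfolding Msp_def by blast
  have x: "x = (\<Sum>i\<in>F \<union> G. (if i \<in> F then c i else 0) *\<^sub>R a i)"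
    using FG(1,3,4) sum_ext_zero[of "F \<union> G" F c a] by simp
  have y: "y = (\<Sum>i\<in>F \<union> G. (if i \<in> G then d i else 0) *\<^sub>R a i)"
    using FG(1,4,6) sum_ext_zero[of "F \<union> G" G d a] by simp
  have "x + y = (\<Sum>i\<in>F \<union> G. ((if i \<in> F then c i else 0) + (if i \<in> G then d i else 0)) *\<^sub>R a i)"
    unfolding x y scaleR_add_left sum.distrib ..
  then show "x + y \<in> Msp a n" unfolding Msp_def using FG
    by (intro CollectI exI[of _ "F \<union> G"] exI[of _ "\<lambda>i. (if i \<in> F then c i else 0) + (if i \<in> G then d i else 0)"]) auto
next
  fix r :: real and x assume "x \<in> Msp a n"
  then obtain F c where F: "finite F" "F \<subseteq> {n..}" "x = (\<Sum>i\<in>F. c i *\<^sub>R a i)" unfolding Msp_def by blast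
  have "r *\<^sub>R x = (\<Sum>i\<in>F. (r * c i) *\<^sub>R a i)" using F by (simp add: scaleR_sum_right)
  then show "r *\<^sub>R x \<in> Msp a n" unfolding Msp_def using F
    by (intro CollectI exI[of _ F] exI[of _ "\<lambda>i. r * c i"]) auto
qed

lemma Msp_mem: "m \<ge> n \<Longrightarrow> a m \<in> Msp a n"
  unfolding Msp_def by (rule CollectI, rule exI[of _ "{m}"], rule exI[of _ "\<lambda>_. 1"]) auto

lemma Msp_mono: "n \<le> m \<Longrightarrow> Msp a m \<subseteq> Msp a n"
  unfolding Msp_def by fastforce

lemma block_diff:
  assumes A: "is_tvs TYPE('a::{real_vector,t2_space})"
    and R: "RN_convergent (a::nat \<Rightarrow> 'a)" and B: "strict_mono B"
  shows "((\<lambda>k. \<Sum>i\<in>{B k..<B (Suc k)}. d i *\<^sub>R a i) \<longlongrightarrow> 0) sequentially"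
proof -
  obtain s where s: "(\<lambda>i. d i *\<^sub>R a i) sums s" using R unfolding RN_convergent_def summable_def by blast
  define P where "P n = (\<Sum>i<n. d i *\<^sub>R a i)" for n
  have P: "P \<longlonglongrightarrow> s" using s unfolding sums_def P_def .
  have B2: "strict_mono (\<lambda>k. B (Suc k))" using B by (simp add: strict_mono_def)
  have "((\<lambda>k. P (B (Suc k)) - P (B k)) \<longlongrightarrow> s - s) sequentially"
    using tvs_diff[OF A LIMSEQ_subseq_LIMSEQ[OF P B2] LIMSEQ_subseq_LIMSEQ[OF P B]]
    by (simp add: o_def)
  moreover have "P (B (Suc k)) - P (B k) = (\<Sum>i\<in>{B k..<B (Suc k)}. d i *\<^sub>R a i)" for k
  proof -
    have le: "B k \<le> B (Suc k)" using B by (simp add: strict_mono_less_eq)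
    have "{..<B (Suc k)} = {..<B k} \<union> {B k..<B (Suc k)}" using le by auto
    then have "P (B (Suc k)) = P (B k) + (\<Sum>i\<in>{B k..<B (Suc k)}. d i *\<^sub>R a i)"
      unfolding P_def by (simp add: sum.union_disjoint ivl_disj_int)
    then show ?thesis by simp
  qed
  ultimately show ?thesis by simp
qed

lemma tail_small:
  assumes A: "is_tvs TYPE('a::{real_vector,t2_space})"
    and R: "RN_convergent (a::nat \<Rightarrow> 'a)" and U: "open U" "0 \<in> U"
  shows "\<exists>N. Msp a N \<subseteq> U"
proof (rule ccontr)
  assume "\<not> ?thesis"
  then have "\<forall>N. \<exists>F c. finite F \<and> F \<subseteq> {N..} \<and> (\<Sum>i\<in>F. c i *\<^sub>R a i) \<notin> U"
    unfolding Msp_def by blast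
  then obtain G c where G: "\<And>N. finite (G N)" "\<And>N. G N \<subseteq> {N..}"
    "\<And>N. (\<Sum>i\<in>G N. c N i *\<^sub>R a i) \<notin> U" by metis
  define nxt where "nxt N = Suc (Max (insert N (G N)))" for N
  have nxt1: "N < nxt N" for N unfolding nxt_def using G(1) by (simp add: le_imp_less_Suc)
  have nxt2: "G N \<subseteq> {N..<nxt N}" for N
  proof
    fix x assume x: "x \<in> G N"
    then have "N \<le> x" using G(2) by blast
    moreover have "x \<le> Max (insert N (G N))" using x G(1) by simp
    ultimately show "x \<in> {N..<nxt N}" unfolding nxt_def by simp
  qed
  define B where "B k = (nxt ^^ k) 0" for k
  have BS: "B (Suc k) = nxt (B k)" for k by (simp add: B_def)
  have Bm: "strict_mono B" unfolding strict_mono_Suc_iff using BS nxt1 by simp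
  define blk where "blk i = (LEAST k. i < B (Suc k))" for i
  have blk: "blk i = k" if "B k \<le> i" "i < B (Suc k)" for i k
    unfolding blk_def
  proof (rule Least_equality)
    show "i < B (Suc k)" by fact
    fix k' assume k': "i < B (Suc k')"
    show "k \<le> k'"
    proof (rule ccontr)
      assume "\<not> k \<le> k'"
      then have "B (Suc k') \<le> B k" using Bm by (simp add: strict_mono_less_eq)
      with k' that show False by simp
    qed
  qed
  define d where "d i = (if i \<in> G (B (blk i)) then c (B (blk i)) i else 0)" for i
  have eq: "(\<Sum>i\<in>{B k..<B (Suc k)}. d i *\<^sub>R a i) = (\<Sum>i\<in>G (B k). c (B k) i *\<^sub>R a i)" for k
  proof -
    have "(\<Sum>i\<in>{B k..<B (Suc k)}. d i *\<^sub>R a i)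
        = (\<Sum>i\<in>{B k..<B (Suc k)}. (if i \<in> G (B k) then c (B k) i else 0) *\<^sub>R a i)"
      by (rule sum.cong) (auto simp: d_def blk)
    also have "\<dots> = (\<Sum>i\<in>G (B k). c (B k) i *\<^sub>R a i)"
      using sum_ext_zero[of "{B k..<B (Suc k)}" "G (B k)" "c (B k)" a] nxt2 BS by simp
    finally show ?thesis .
  qed
  have "eventually (\<lambda>k. (\<Sum>i\<in>{B k..<B (Suc k)}. d i *\<^sub>R a i) \<in> U) sequentially"
    using topological_tendstoD[OF block_diff[OF A R Bm, of d] U] .
  then obtain k where "(\<Sum>i\<in>{B k..<B (Suc k)}. d i *\<^sub>R a i) \<in> U"
    unfolding eventually_sequentially by blast
  with G(3) eq show False by metis
qed




lemma coef_small:
  assumes A: "is_tvs TYPE('a::{real_vector,t2_space})"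
    and C: "subspace (C::'a set)" "closed C" and x: "x \<notin> C" and e: "(\<epsilon>::real) > 0"
  shows "\<exists>U. open U \<and> 0 \<in> U \<and> (\<forall>t c. c \<in> C \<longrightarrow> t *\<^sub>R x + c \<in> U \<longrightarrow> \<bar>t\<bar> < \<epsilon>)"
proof -
  define W where "W = {y. 1 *\<^sub>R y + (-x) \<in> - C}"
  have oW: "open W" unfolding W_def using C(2) by (intro tvs_open_preimage[OF A]) auto
  have "-x \<notin> C" using x C subspace_neg by fastforce
  then have W0: "0 \<in> W" unfolding W_def by simp
  have c: "continuous_on UNIV (\<lambda>p::real \<times> 'a. fst p *\<^sub>R snd p)" using A by (simp add: is_tvs_def)
  have "open ((\<lambda>p::real \<times> 'a. fst p *\<^sub>R snd p) -` W)" using open_vimage[OF oW c] .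
  moreover have "(0,0) \<in> (\<lambda>p::real \<times> 'a. fst p *\<^sub>R snd p) -` W" using W0 by simp
  ultimately obtain P Q where PQ: "open P" "open Q" "(0,0) \<in> P \<times> Q"
    "P \<times> Q \<subseteq> (\<lambda>p::real \<times> 'a. fst p *\<^sub>R snd p) -` W" by (rule open_prod_elim)
  obtain \<delta> where d: "\<delta> > 0" "ball 0 \<delta> \<subseteq> P" using PQ(1,3) by (meson mem_Sigma_iff openE)
  define \<kappa> where "\<kappa> = \<delta> * \<epsilon> / 2"
  have k: "\<kappa> > 0" unfolding \<kappa>_def using d e by simp
  define U where "U = {y. (1/\<kappa>) *\<^sub>R y + 0 \<in> Q}"
  have oU: "open U" unfolding U_def by (rule tvs_open_preimage[OF A PQ(2)])
  have U0: "0 \<in> U" unfolding U_def using PQ(3) by simp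
  have "\<bar>t\<bar> < \<epsilon>" if ct: "c \<in> C" "t *\<^sub>R x + c \<in> U" for t c
  proof (rule ccontr)
    assume "\<not> \<bar>t\<bar> < \<epsilon>"
    then have te: "\<bar>t\<bar> \<ge> \<epsilon>" by simp
    then have t0: "t \<noteq> 0" using e by auto
    have "\<bar>\<kappa> / t\<bar> \<le> \<delta> / 2"
    proof -
      have "\<bar>\<kappa> / t\<bar> = \<kappa> / \<bar>t\<bar>" using k by simp
      also have "\<dots> \<le> \<kappa> / \<epsilon>" using k e te by (simp add: frac_le)
      also have "\<dots> = \<delta> / 2" unfolding \<kappa>_def using e by simp
      finally show ?thesis .
    qed
    then have "\<bar>\<kappa> / t\<bar> < \<delta>" using d(1) by linarith
    then have "\<kappa> / t \<in> P" by (intro subsetD[OF d(2)]) (simp add: dist_norm)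
    moreover have "(1/\<kappa>) *\<^sub>R (t *\<^sub>R x + c) \<in> Q" using ct(2) unfolding U_def by simp
    ultimately have "(\<kappa> / t) *\<^sub>R ((1/\<kappa>) *\<^sub>R (t *\<^sub>R x + c)) \<in> W" using PQ(4) by auto
    moreover have "(\<kappa> / t) *\<^sub>R ((1/\<kappa>) *\<^sub>R (t *\<^sub>R x + c)) = x + (1/t) *\<^sub>R c"
      using k t0 by (simp add: scaleR_add_right)
    ultimately have "(1/t) *\<^sub>R c \<notin> C" unfolding W_def by simp
    moreover have "(1/t) *\<^sub>R c \<in> C" using C(1) ct(1) subspace_scale by blast
    ultimately show False by blast
  qed
  then show ?thesis using oU U0 by blast
qed




locale rnc =
  fixes a :: "nat \<Rightarrow> 'a::{real_vector,t2_space}"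
  assumes A: "is_tvs TYPE('a)" and R: "RN_convergent a" and NT: "nontrivial_seq a"
begin

definition CC :: "nat \<Rightarrow> 'a set" where "CC n = closure (Msp a n)"

lemma CC_subspace: "subspace (CC n)"
  unfolding CC_def by (rule closure_subspace_tvs[OF A Msp_subspace])

lemma CC_closed: "closed (CC n)" unfolding CC_def by simp

lemma CC_mono: "n \<le> m \<Longrightarrow> CC m \<subseteq> CC n"
  unfolding CC_def by (intro closure_mono Msp_mono)

lemma CC_mem: "n \<le> m \<Longrightarrow> a m \<in> CC n"
  unfolding CC_def using Msp_mem closure_subset by blast

lemma CC_inter: assumes "\<And>n. x \<in> CC n" shows "x = 0"
proof (rule ccontr)
  assume "x \<noteq> 0"
  then obtain W where W: "open W" "0 \<in> W" "x \<notin> W" by (metis separation_t1)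
  obtain V where V: "open V" "0 \<in> V" "closure V \<subseteq> W" using tvs_regular[OF A W(1,2)] by blast
  obtain N where N: "Msp a N \<subseteq> V" using tail_small[OF A R V(1,2)] by blast
  have "CC N \<subseteq> W" unfolding CC_def using closure_mono[OF N] V(3) by blast
  with assms W(3) show False by blast
qed

lemma drops: "\<exists>n\<ge>N. a n \<notin> CC (Suc n)"
proof (rule ccontr)
  assume "\<not> ?thesis"
  then have H: "\<And>n. n \<ge> N \<Longrightarrow> a n \<in> CC (Suc n)" by auto
  have step: "CC n \<subseteq> CC (Suc n)" if n: "n \<ge> N" for n
  proof -
    have "Msp a n \<subseteq> CC (Suc n)"
    proof
      fix y assume "y \<in> Msp a n"
      then obtain F c where F: "finite F" "F \<subseteq> {n..}" "y = (\<Sum>i\<in>F. c i *\<^sub>R a i)"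
        unfolding Msp_def by blast
      have "a i \<in> CC (Suc n)" if "i \<in> F" for i
      proof (cases "i = n")
        case True then show ?thesis using H n by simp
      next
        case False then have "Suc n \<le> i" using F(2) that by auto
        then show ?thesis by (rule CC_mem)
      qed
      then show "y \<in> CC (Suc n)" unfolding F(3)
        by (intro subspace_sum[OF CC_subspace] subspace_scale[OF CC_subspace])
    qed
    then show ?thesis unfolding CC_def[of n]
      by (intro closure_minimal CC_closed)
  qed
  have up: "CC N \<subseteq> CC (N + k)" for k
  proof (induction k)
    case (Suc k) then show ?case using step[of "N + k"] by simp
  qed simp
  have "a m = 0" if m: "m \<ge> N" for m
  proof (rule CC_inter)
    fix n
    have aN: "a m \<in> CC N" using CC_mem m by blast
    show "a m \<in> CC n"
    proof (cases "n \<le> N")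
      case True then show ?thesis using aN CC_mono by blast
    next
      case False
      then have "CC N \<subseteq> CC n" using up[of "n - N"] by simp
      then show ?thesis using aN by blast
    qed
  qed
  then have "{n. a n \<noteq> 0} \<subseteq> {..<N}"
  proof (intro subsetI)
    fix n assume "n \<in> {n. a n \<noteq> 0}"
    then have "\<not> N \<le> n" using \<open>\<And>m. N \<le> m \<Longrightarrow> a m = 0\<close> by auto
    then show "n \<in> {..<N}" by simp
  qed
  then have "finite {n. a n \<noteq> 0}" using finite_subset by blast
  with NT show False unfolding nontrivial_seq_def by blast
qed

definition DD where "DD = {n. a n \<notin> CC (Suc n)}"

lemma DD_inf: "infinite DD"
  unfolding DD_def infinite_nat_iff_unbounded_le using drops by blast

definition sig where "sig = enumerate DD"

lemma sig_mono: "strict_mono sig" unfolding sig_def by (rule strict_mono_enumerate[OF DD_inf])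

lemma sig_in: "a (sig k) \<notin> CC (Suc (sig k))"
  using enumerate_in_set[OF DD_inf, of k] unfolding sig_def DD_def by simp

definition b where "b k = a (sig k)"

lemma b_conv: "summable (\<lambda>k. r k *\<^sub>R b k)"
proof -
  define f where "f i = (if i \<in> range sig then r (inv sig i) else 0) *\<^sub>R a i" for i
  have inj: "inj sig" using sig_mono strict_mono_imp_inj_on by blast
  have "summable f"
    using R[unfolded RN_convergent_def, rule_format, of "\<lambda>i. if i \<in> range sig then r (inv sig i) else 0"]
    unfolding f_def by simp
  then obtain s where s: "f sums s" unfolding summable_def by blast
  have "(\<lambda>k. f (sig k)) sums s"
    using sums_mono_reindex[OF sig_mono, of f s] s by (simp add: f_def)
  moreover have "f (sig k) = r k *\<^sub>R b k" for k unfolding f_def b_def using inj by simp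
  ultimately show ?thesis unfolding summable_def by auto
qed

definition S :: "(nat \<Rightarrow> real) \<Rightarrow> 'a" where "S r = suminf (\<lambda>k. r k *\<^sub>R b k)"

lemma S_sums: "(\<lambda>k. r k *\<^sub>R b k) sums S r"
  unfolding S_def using b_conv summable_sums by blast

lemma S_add: "S (\<lambda>n. f n + g n) = S f + S g"
proof -
  have e: "(\<lambda>n. (\<Sum>k<n. f k *\<^sub>R b k) + (\<Sum>k<n. g k *\<^sub>R b k)) = (\<lambda>n. \<Sum>k<n. (f k + g k) *\<^sub>R b k)"
    by (auto simp: scaleR_add_left sum.distrib)
  have "((\<lambda>n. (\<Sum>k<n. f k *\<^sub>R b k) + (\<Sum>k<n. g k *\<^sub>R b k)) \<longlongrightarrow> S f + S g) sequentially"
    using tvs_add[OF A S_sums[of f, unfolded sums_def] S_sums[of g, unfolded sums_def]] .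
  then have "(\<lambda>k. (f k + g k) *\<^sub>R b k) sums (S f + S g)" unfolding sums_def e .
  from sums_unique[OF this] show ?thesis by (simp add: S_def)
qed

lemma S_scale: "S (\<lambda>n. c * f n) = c *\<^sub>R S f"
proof -
  have "((\<lambda>n. c *\<^sub>R (\<Sum>k<n. f k *\<^sub>R b k)) \<longlongrightarrow> c *\<^sub>R S f) sequentially"
    using tvs_scale[OF A tendsto_const S_sums[of f, unfolded sums_def]] .
  then have "(\<lambda>k. (c * f k) *\<^sub>R b k) sums (c *\<^sub>R S f)" unfolding sums_def
    by (simp add: scaleR_sum_right)
  from sums_unique[OF this] show ?thesis by (simp add: S_def)
qed

lemma S_diff: "S (\<lambda>n. f n - g n) = S f - S g"
  using S_add[of f "\<lambda>n. (-1) * g n"] S_scale[of "-1" g] by simp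

lemma S_zero: "S (\<lambda>n. 0) = 0"
  using S_scale[of 0 "\<lambda>n. 0"] by simp

lemma tail: "S r - (\<Sum>j<Suc k. r j *\<^sub>R b j) \<in> CC (Suc (sig k))"
proof -
  define Q where "Q n = (\<Sum>j<n. r j *\<^sub>R b j)" for n
  have Q: "Q \<longlonglongrightarrow> S r" using S_sums unfolding sums_def Q_def .
  have lim: "((\<lambda>n. Q n - Q (Suc k)) \<longlongrightarrow> S r - Q (Suc k)) sequentially"
    by (rule tvs_diff[OF A Q tendsto_const])
  have ev: "eventually (\<lambda>n. Q n - Q (Suc k) \<in> CC (Suc (sig k))) sequentially"
    unfolding eventually_sequentially
  proof (intro exI allI impI)
    fix n assume n: "Suc k \<le> n"
    have "{..<n} = {..<Suc k} \<union> {Suc k..<n}" using n by auto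
    then have "Q n = Q (Suc k) + (\<Sum>j\<in>{Suc k..<n}. r j *\<^sub>R b j)"
      unfolding Q_def by (simp add: sum.union_disjoint ivl_disj_int)
    moreover have "(\<Sum>j\<in>{Suc k..<n}. r j *\<^sub>R b j) \<in> CC (Suc (sig k))"
    proof (intro subspace_sum[OF CC_subspace] subspace_scale[OF CC_subspace])
      fix j assume "j \<in> {Suc k..<n}"
      then have "sig k < sig j" using sig_mono by (simp add: strict_mono_less)
      then show "b j \<in> CC (Suc (sig k))" unfolding b_def by (intro CC_mem) simp
    qed
    ultimately show "Q n - Q (Suc k) \<in> CC (Suc (sig k))" by simp
  qed
  have "S r - Q (Suc k) \<in> CC (Suc (sig k))"
    by (rule Lim_in_closed_set[OF CC_closed ev _ lim]) simp
  then show ?thesis unfolding Q_def .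
qed

end



context rnc begin

lemma S_zero_inj: assumes "S r = 0" shows "r = (\<lambda>n. 0)"
proof (rule ccontr)
  assume "r \<noteq> (\<lambda>n. 0)"
  then have ex: "\<exists>k. r k \<noteq> 0" by auto
  define k where "k = (LEAST k. r k \<noteq> 0)"
  have rk: "r k \<noteq> 0" unfolding k_def using LeastI_ex[OF ex] .
  have below: "r j = 0" if "j < k" for j using not_less_Least[OF that[unfolded k_def]] by simp
  have "(\<Sum>j<Suc k. r j *\<^sub>R b j) = r k *\<^sub>R b k"
    using below by (simp add: sum.lessThan_Suc)
  then have "- (r k *\<^sub>R b k) \<in> CC (Suc (sig k))" using tail[of r k] assms by simp
  then have "(- 1 / r k) *\<^sub>R (- (r k *\<^sub>R b k)) \<in> CC (Suc (sig k))"
    using subspace_scale[OF CC_subspace] by blast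
  then have "b k \<in> CC (Suc (sig k))" using rk by simp
  then show False using sig_in unfolding b_def by blast
qed

lemma S_inj: "inj S"
proof (rule injI)
  fix r r' assume "S r = S r'"
  then have "S (\<lambda>n. r n - r' n) = 0" by (simp add: S_diff)
  then have "(\<lambda>n. r n - r' n) = (\<lambda>n. 0)" by (rule S_zero_inj)
  then show "r = r'" by (simp add: fun_eq_iff)
qed

lemma coord_tend:
  assumes q: "((\<lambda>t. S (q t)) \<longlongrightarrow> 0) F"
  shows "((\<lambda>t. q t k) \<longlongrightarrow> 0) F"
proof (induction k rule: less_induct)
  case (less k)
  define w where "w t = S (q t) - (\<Sum>j<k. q t j *\<^sub>R b j)" for t
  have "(w \<longlongrightarrow> 0 - (\<Sum>j<k. 0 *\<^sub>R b j)) F"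
    unfolding w_def
    by (intro tvs_diff[OF A q] tvs_sum[OF A] tvs_scale[OF A] less tendsto_const) simp
  then have w: "(w \<longlongrightarrow> 0) F" by simp
  have wd: "w t - q t k *\<^sub>R b k \<in> CC (Suc (sig k))" for t
    using tail[of "q t" k] unfolding w_def by (simp add: sum.lessThan_Suc algebra_simps)
  have bk: "b k \<notin> CC (Suc (sig k))" using sig_in unfolding b_def .
  show ?case
  proof (rule tendstoI)
    fix e :: real assume e: "e > 0"
    obtain U where U: "open U" "0 \<in> U"
      "\<And>t c. c \<in> CC (Suc (sig k)) \<Longrightarrow> t *\<^sub>R b k + c \<in> U \<Longrightarrow> \<bar>t\<bar> < e"
      using coef_small[OF A CC_subspace CC_closed bk e] by blast
    have "eventually (\<lambda>t. w t \<in> U) F" using topological_tendstoD[OF w U(1,2)] .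
    then show "eventually (\<lambda>t. dist (q t k) 0 < e) F"
    proof (rule eventually_mono)
      fix t assume "w t \<in> U"
      then have "q t k *\<^sub>R b k + (w t - q t k *\<^sub>R b k) \<in> U" by simp
      then have "\<bar>q t k\<bar> < e" using U(3) wd by blast
      then show "dist (q t k) 0 < e" by simp
    qed
  qed
qed

lemma coord_cont: "((\<lambda>t. \<rho> t j) \<longlongrightarrow> l j) F" if "(\<rho> \<longlongrightarrow> l) F"
  using continuous_on_tendsto_compose[OF continuous_on_product_coordinates[of j] that] by simp

lemma S_tend0:
  assumes r: "(\<rho> \<longlongrightarrow> (\<lambda>n. 0)) F"
  shows "((\<lambda>t. S (\<rho> t)) \<longlongrightarrow> 0) F"
proof (rule topological_tendstoI)
  fix W :: "'a set" assume W: "open W" "0 \<in> W"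
  obtain V where V: "open V" "0 \<in> V" "\<And>u v. u \<in> V \<Longrightarrow> v \<in> V \<Longrightarrow> u + v \<in> W \<and> u - v \<in> W"
    using tvs_half[OF A W] by blast
  obtain V1 where V1: "open V1" "0 \<in> V1" "closure V1 \<subseteq> V" using tvs_regular[OF A V(1,2)] by blast
  obtain N where N: "Msp a N \<subseteq> V1" using tail_small[OF A R V1(1,2)] by blast
  have CN: "CC N \<subseteq> V" unfolding CC_def using closure_mono[OF N] V1(3) by blast
  have "N \<le> Suc (sig N)" using seq_suble[OF sig_mono, of N] by simp
  then have tl: "S (\<rho> t) - (\<Sum>j<Suc N. \<rho> t j *\<^sub>R b j) \<in> V" for t
    using tail[of "\<rho> t" N] CC_mono CN by blast
  have "((\<lambda>t. \<Sum>j<Suc N. \<rho> t j *\<^sub>R b j) \<longlongrightarrow> (\<Sum>j<Suc N. 0 *\<^sub>R b j)) F"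
    by (intro tvs_sum[OF A] tvs_scale[OF A] tendsto_const coord_cont[OF r, simplified])
  then have "((\<lambda>t. \<Sum>j<Suc N. \<rho> t j *\<^sub>R b j) \<longlongrightarrow> 0) F" by simp
  then have "eventually (\<lambda>t. (\<Sum>j<Suc N. \<rho> t j *\<^sub>R b j) \<in> V) F"
    using topological_tendstoD V(1,2) by blast
  then show "eventually (\<lambda>t. S (\<rho> t) \<in> W) F"
  proof (rule eventually_mono)
    fix t assume "(\<Sum>j<Suc N. \<rho> t j *\<^sub>R b j) \<in> V"
    then have "(\<Sum>j<Suc N. \<rho> t j *\<^sub>R b j) + (S (\<rho> t) - (\<Sum>j<Suc N. \<rho> t j *\<^sub>R b j)) \<in> W"
      using V(3) tl by blast
    then show "S (\<rho> t) \<in> W" by simp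
  qed
qed

lemma S_cont: "continuous_on UNIV S"
  unfolding continuous_on_def
proof (intro ballI)
  fix r0 :: "nat \<Rightarrow> real"
  define \<rho> where "\<rho> x = (\<lambda>n. x n - r0 n)" for x :: "nat \<Rightarrow> real"
  have c: "continuous_on UNIV \<rho>" unfolding \<rho>_def
    by (intro continuous_on_coordinatewise_then_product continuous_on_diff
        continuous_on_product_coordinates continuous_on_const)
  have "(\<rho> \<longlongrightarrow> \<rho> r0) (at r0 within UNIV)"
    using continuous_on_tendsto_compose[OF c tendsto_ident_at[of r0 UNIV]] by simp
  then have "(\<rho> \<longlongrightarrow> (\<lambda>n. 0)) (at r0 within UNIV)" by (simp add: \<rho>_def)
  from tvs_add[OF A S_tend0[OF this] tendsto_const[of "S r0"]]
  have "((\<lambda>x. S (\<rho> x) + S r0) \<longlongrightarrow> S r0) (at r0 within UNIV)" by simp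
  moreover have "S (\<rho> x) + S r0 = S x" for x unfolding \<rho>_def by (simp add: S_diff)
  ultimately show "(S \<longlongrightarrow> S r0) (at r0 within UNIV)" by simp
qed

lemma R_cont: "continuous_on (range S) (inv S)"
proof (intro continuous_on_coordinatewise_then_product)
  fix k
  show "continuous_on (range S) (\<lambda>y. inv S y k)"
    unfolding continuous_on_def
  proof (intro ballI)
    fix y0 assume y0: "y0 \<in> range S"
    define q where "q y = (\<lambda>n. inv S y n - inv S y0 n)" for y
    have ev: "eventually (\<lambda>y. y - y0 = S (q y)) (at y0 within range S)"
      unfolding eventually_at_filter
      by (rule always_eventually) (use y0 in \<open>auto simp: q_def S_diff f_inv_into_f\<close>)
    have "((\<lambda>y. y - y0) \<longlongrightarrow> y0 - y0) (at y0 within range S)"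
      by (intro tvs_diff[OF A] tendsto_ident_at tendsto_const)
    then have "((\<lambda>y. S (q y)) \<longlongrightarrow> 0) (at y0 within range S)"
      using Lim_transform_eventually[OF _ ev] by simp
    from coord_tend[OF this, of k]
    have "((\<lambda>y. inv S y k - inv S y0 k) \<longlongrightarrow> 0) (at y0 within range S)" by (simp add: q_def)
    from tendsto_add[OF this tendsto_const[of "inv S y0 k"]]
    show "((\<lambda>y. inv S y k) \<longlongrightarrow> inv S y0 k) (at y0 within range S)" by simp
  qed
qed

lemma contains: "contains_RN TYPE('a)"
  unfolding contains_RN_def
proof (intro exI conjI allI)
  show "subspace (range S)"
    unfolding subspace_def
  proof (intro conjI ballI allI)
    show "0 \<in> range S" using S_zero by (metis rangeI)
  next
    fix x y assume "x \<in> range S" "y \<in> range S"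
    then obtain f g where "x = S f" "y = S g" by blast
    then show "x + y \<in> range S" using S_add[of f g] by (metis rangeI)
  next
    fix c :: real and x assume "x \<in> range S"
    then obtain f where "x = S f" by blast
    then show "c *\<^sub>R x \<in> range S" using S_scale[of c f] by (metis rangeI)
  qed
next
  fix f g show "S (\<lambda>n. f n + g n) = S f + S g" by (rule S_add)
next
  fix c f show "S (\<lambda>n. c * f n) = c *\<^sub>R S f" by (rule S_scale)
next
  show "homeomorphic_map euclidean (top_of_set (range S)) S"
    unfolding homeomorphic_map_maps
  proof (intro exI[of _ "inv S"])
    show "homeomorphic_maps euclidean (top_of_set (range S)) S (inv S)"
      unfolding homeomorphic_maps_def
      using S_cont R_cont S_inj
      by (auto simp: continuous_map_in_subtopology f_inv_into_f)
  qed
qed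

end



lemma forward:
  assumes "contains_RN TYPE('a::{real_vector,t2_space})"
  shows "\<exists>a::nat \<Rightarrow> 'a. nontrivial_seq a \<and> RN_convergent a"
proof -
  obtain L and T :: "(nat \<Rightarrow> real) \<Rightarrow> 'a" where
    L: "subspace L" and Tadd: "\<And>f g. T (\<lambda>n. f n + g n) = T f + T g"
    and Tsc: "\<And>c f. T (\<lambda>n. c * f n) = c *\<^sub>R T f"
    and H: "homeomorphic_map (euclidean :: (nat \<Rightarrow> real) topology) (top_of_set L) T"
    using assms unfolding contains_RN_def by blast
  have inj: "inj T" using homeomorphic_imp_injective_map[OF H] by simp
  have cT: "continuous_on UNIV T"
    using homeomorphic_imp_continuous_map[OF H] by (simp add: continuous_map_in_subtopology)
  have T0: "T (\<lambda>n. 0) = 0" using Tsc[of 0 "\<lambda>n. 0"] by simp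
  define e where "e n = (\<lambda>m::nat. if m = n then 1 else (0::real))" for n
  define a where "a n = T (e n)" for n
  have "a n \<noteq> 0" for n
  proof
    assume "a n = 0"
    then have "T (e n) = T (\<lambda>n. 0)" using T0 by (simp add: a_def)
    then have "e n = (\<lambda>n. 0)" using inj by (simp add: inj_eq)
    then show False unfolding e_def by (metis zero_neq_one)
  qed
  then have NT: "nontrivial_seq a" unfolding nontrivial_seq_def by simp
  have "RN_convergent a"
    unfolding RN_convergent_def summable_def sums_def
  proof
    fix r :: "nat \<Rightarrow> real"
    define p where "p N = (\<lambda>m. \<Sum>n<N. r n * e n m)" for N
    have ps: "(\<Sum>n<N. r n *\<^sub>R a n) = T (p N)" for N
    proof (induction N)
      case 0 then show ?case by (simp add: p_def T0)
    next
      case (Suc N)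
      have "p (Suc N) = (\<lambda>m. p N m + r N * e N m)" by (simp add: p_def)
      then have "T (p (Suc N)) = T (p N) + r N *\<^sub>R T (e N)"
        by (simp add: Tadd Tsc[of "r N" "e N", symmetric])
      then show ?case using Suc by (simp add: a_def)
    qed
    have pi: "p N i = r i" if "i < N" for N i
    proof -
      have "p N i = (\<Sum>n\<in>{..<N}. if n = i then r n else 0)"
        unfolding p_def e_def by (intro sum.cong) auto
      also have "\<dots> = r i" using that by simp
      finally show ?thesis .
    qed
    have "(p \<longlongrightarrow> r) sequentially"
    proof (rule topological_tendstoI)
      fix U :: "(nat \<Rightarrow> real) set" assume U: "open U" "r \<in> U"
      then have "openin (product_topology (\<lambda>i. euclidean) UNIV) U" by (simp add: open_fun_def)
      from product_topology_open_contains_basis[OF this U(2)]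
      obtain X where X: "r \<in> (\<Pi>\<^sub>E i\<in>UNIV. X i)" "finite {i. X i \<noteq> UNIV}"
        "(\<Pi>\<^sub>E i\<in>UNIV. (X i :: real set)) \<subseteq> U" by auto
      obtain M where M: "\<And>i. i \<in> {i. X i \<noteq> UNIV} \<Longrightarrow> i < M"
        using finite_nat_bounded[OF X(2)] by (auto simp: lessThan_def)
      show "eventually (\<lambda>N. p N \<in> U) sequentially"
        unfolding eventually_sequentially
      proof (intro exI allI impI)
        fix N assume N: "M \<le> N"
        have "p N \<in> (\<Pi>\<^sub>E i\<in>UNIV. X i)"
        proof (simp add: PiE_iff, intro allI)
          fix i show "p N i \<in> X i"
          proof (cases "X i = UNIV")
            case False
            then have "i < N" using M N by fastforce
            then show ?thesis using pi X(1) by (simp add: PiE_iff)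
          qed simp
        qed
        then show "p N \<in> U" using X(3) by blast
      qed
    qed
    from continuous_on_tendsto_compose[OF cT this]
    have "((\<lambda>N. T (p N)) \<longlongrightarrow> T r) sequentially" by simp
    then show "\<exists>s. (\<lambda>N. \<Sum>n<N. r n *\<^sub>R a n) \<longlonglongrightarrow> s" using ps by auto
  qed
  with NT show ?thesis by blast
qed

theorem theorem11p4:
  assumes "is_tvs TYPE('a::{real_vector, t2_space})"
  shows "contains_RN TYPE('a) \<longleftrightarrow> (\<exists>a::nat \<Rightarrow> 'a. nontrivial_seq a \<and> RN_convergent a)"
proof
  assume "contains_RN TYPE('a)" then show "\<exists>a::nat \<Rightarrow> 'a. nontrivial_seq a \<and> RN_convergent a"
    by (rule forward)
next
  assume "\<exists>a::nat \<Rightarrow> 'a. nontrivial_seq a \<and> RN_convergent a"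
  then obtain a :: "nat \<Rightarrow> 'a" where "nontrivial_seq a" "RN_convergent a" by blast
  then interpret rnc a using assms by unfold_locales
  show "contains_RN TYPE('a)" by (rule contains)
qed


end
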